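(* Let Assumptions 1 and 2 hold, let $S\ge1$ be an integer and $B>0$. Let $u_1,\dots,u_T\in\mathbb{R}^N$ be payoff vectors, set $u_\tau=0$ for $\tau\le0$, and assume $\|u_t-u_{t-1}\|_\infty\le B$ for all $t=1,\dots,T$. Consider OFTRL with $S$-step recency bias, $\beta_t=\frac1S\sum_{\tau=t-S}^{t-1}u_\tau$ and $x_t=\arg\max_{x\in\Delta_N}\{\langle\theta_{t-1}+\beta_t,x\rangle-\mathcal R(x)\}$, $t=1,\dots,T$. If $\varphi_1(0)>0$ and $\eta=\sqrt{\frac{LTS^2B^2}{2\varphi_1(0)}}$, then $$R^T_{OFTRL}\le SB\sqrt{2LT\varphi_1(0)} .$$
   Context: Let $N\ge 2$, $A=\{1,\dots,N\}$, and $\Delta_N=\{x\in\mathbb{R}^N: x_i\ge 0,\ \sum_i x_i=1\}$. Let $\epsilon=(\epsilon_1,\dots,\epsilon_N)$ be a random vector satisfying Assumption 1: each $\epsilon_i$ is integrable with $\mathbb{E}[\epsilon_i]=0$, and the law of $\epsilon$ is absolutely continuous with respect to Lebesgue measure on $\mathbb{R}^N$ with support all of $\mathbb{R}^N$. For $\eta>0$ the social surplus function is $\varphi_\eta(\theta)=\mathbb{E}[\max_{j\in A}(\theta_j+\eta\epsilon_j)]$, $\theta\in\mathbb{R}^N$; thus $\varphi_\eta(\theta)=\eta\varphi_1(\theta/\eta)$, and $\varphi_1(0)=\mathbb{E}[\max_i\epsilon_i]$. $\varphi_\eta$ is convex and differentiable with $\nabla\varphi_\eta(\theta)\in\Delta_N$.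 Assumption 2: $\varphi_1$ is twice continuously differentiable and there is a constant $L>0$ with $2\,\mathrm{tr}(\nabla^2\varphi_1(\theta))\le L$ for all $\theta\in\mathbb{R}^N$. Set $\theta_0=0$, $\theta_t=\sum_{s=1}^tu_s$. Regularizer: $\mathcal R(x)=\sup_{\theta\in\mathbb{R}^N}\{\langle\theta,x\rangle-\varphi_\eta(\theta)\}$ for $x\in\Delta_N$. The regret of $x_1,\dots,x_T$ is $R^T=\max_{x\in\Delta_N}\langle\theta_T,x\rangle-\sum_{t=1}^T\langle u_t,x_t\rangle$. *)

theory Defs
  imports "HOL-Probability.Probability"
begin

text \<open>Probability prob_simplex in R^N (index type 'n, N = CARD('n)).\<close>
definition prob_simplex :: "(real ^ 'n) set" where
  "prob_simplex = {x. (\<forall>i. 0 \<le> x $ i) \<and> (\<Sum>i\<in>UNIV. x $ i) = 1}"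

definition linf_norm :: "real ^ 'n \<Rightarrow> real" where
  "linf_norm v = Max (range (\<lambda>i. \<bar>v $ i\<bar>))"

definition surplus :: "'a measure \<Rightarrow> ('a \<Rightarrow> real ^ 'n) \<Rightarrow> real \<Rightarrow> real ^ 'n \<Rightarrow> real" where
  "surplus M eps eta theta = (\<integral>\<omega>. Max (range (\<lambda>j. theta $ j + eta * eps \<omega> $ j)) \<partial>M)"

definition regularizer :: "'a measure \<Rightarrow> ('a \<Rightarrow> real ^ 'n) \<Rightarrow> real \<Rightarrow> real ^ 'n \<Rightarrow> real" where
  "regularizer M eps eta x = (SUP theta. theta \<bullet> x - surplus M eps eta theta)"

definition cumul :: "(int \<Rightarrow> real ^ 'n) \<Rightarrow> int \<Rightarrow> real ^ 'n" where
  "cumul u t = (\<Sum>s\<in>{1..t}. u s)"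

definition recency :: "nat \<Rightarrow> (int \<Rightarrow> real ^ 'n) \<Rightarrow> int \<Rightarrow> real ^ 'n" where
  "recency S u t = (1 / real S) *\<^sub>R (\<Sum>\<tau>\<in>{t - int S..t - 1}. u \<tau>)"

definition regret :: "(int \<Rightarrow> real ^ 'n) \<Rightarrow> (int \<Rightarrow> real ^ 'n) \<Rightarrow> nat \<Rightarrow> real" where
  "regret u x T = (SUP y\<in>prob_simplex. cumul u (int T) \<bullet> y) - (\<Sum>t\<in>{1..int T}. u t \<bullet> x t)"

end

theory Submission
  imports Defs
begin

definition mx :: "real ^ 'n \<Rightarrow> real" where
  "mx v = Max (range (\<lambda>j. v $ j))"

definition one :: "real ^ 'n" where "one = (\<chi> i. 1)"

lemma mx_ge: "v $ k \<le> mx v"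
  unfolding mx_def by (rule Max_ge) auto

lemma mx_le: "(\<And>k. v $ k \<le> c) \<Longrightarrow> mx v \<le> c"
  unfolding mx_def by (subst Max_le_iff) auto

lemma mx_ex: "\<exists>k. mx v = v $ k"
proof -
  have "Max (range (\<lambda>j. v $ j)) \<in> range (\<lambda>j. v $ j)" by (rule Max_in) auto
  then show ?thesis unfolding mx_def by (metis imageE)
qed

lemma mx_mono: "(\<And>k. v $ k \<le> w $ k) \<Longrightarrow> mx v \<le> mx w"
  by (meson mx_ge mx_le order_trans)

lemma mx_scale: "(c::real) > 0 \<Longrightarrow> mx (c *\<^sub>R v) = c * mx v"
proof -
  assume c: "c > 0"
  obtain k where k: "mx v = v $ k" using mx_ex by blast
  obtain k' where k': "mx (c *\<^sub>R v) = (c *\<^sub>R v) $ k'" using mx_ex by blast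
  have "mx (c *\<^sub>R v) \<ge> c * v $ k" using mx_ge[of "c *\<^sub>R v" k] by simp
  moreover have "v $ k' \<le> mx v" by (rule mx_ge)
  hence "c * v $ k' \<le> c * mx v" using c by simp
  ultimately show ?thesis using k k' by simp
qed

lemma mx_add_const: "mx (v + c *\<^sub>R one) = mx v + c"
proof -
  obtain k where k: "mx v = v $ k" using mx_ex by blast
  obtain k' where k': "mx (v + c *\<^sub>R one) = (v + c *\<^sub>R one) $ k'" using mx_ex by blast
  have "mx (v + c *\<^sub>R one) \<ge> v $ k + c" using mx_ge[of "v + c *\<^sub>R one" k] by (simp add: one_def)
  moreover have "v $ k' \<le> mx v" by (rule mx_ge)
  ultimately show ?thesis using k k' by (simp add: one_def)
qed

lemma mx_lin:
  assumes y: "y \<in> prob_simplex" shows "v \<bullet> y \<le> mx v"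
proof -
  have "v \<bullet> y = (\<Sum>i\<in>UNIV. v $ i * y $ i)" by (simp add: inner_vec_def)
  also have "\<dots> \<le> (\<Sum>i\<in>UNIV. mx v * y $ i)"
    using y mx_ge unfolding prob_simplex_def by (intro sum_mono mult_right_mono) auto
  also have "\<dots> = mx v" using y unfolding prob_simplex_def by (simp add: sum_distrib_left[symmetric])
  finally show ?thesis .
qed

lemma mx_convex:
  assumes "0 \<le> a" "a \<le> 1"
  shows "mx (a *\<^sub>R v + (1 - a) *\<^sub>R w) \<le> a * mx v + (1 - a) * mx w"
proof (rule mx_le)
  fix k
  have "a * v $ k \<le> a * mx v" using assms mx_ge[of v k] by (simp add: mult_left_mono)
  moreover have "(1-a) * w $ k \<le> (1-a) * mx w" using assms mx_ge[of w k] by (simp add: mult_left_mono)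
  ultimately show "(a *\<^sub>R v + (1 - a) *\<^sub>R w) $ k \<le> a * mx v + (1 - a) * mx w" by simp
qed

lemma mx_submod:
  assumes ij: "i \<noteq> j" and s: "s \<ge> 0" and a: "a \<ge> 0"
  shows "mx (w + s *\<^sub>R axis j 1 + a *\<^sub>R axis i 1) + mx w
     \<le> mx (w + s *\<^sub>R axis j 1) + mx (w + a *\<^sub>R axis i 1)"
proof -
  obtain k where k: "mx (w + s *\<^sub>R axis j 1 + a *\<^sub>R axis i 1) = (w + s *\<^sub>R axis j 1 + a *\<^sub>R axis i 1) $ k"
    using mx_ex by blast
  have m1: "mx w \<le> mx (w + s *\<^sub>R axis j 1)" using s by (intro mx_mono) (simp add: axis_def)
  have m2: "mx w \<le> mx (w + a *\<^sub>R axis i 1)" using a by (intro mx_mono) (simp add: axis_def)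
  have g1: "(w + s *\<^sub>R axis j 1) $ k \<le> mx (w + s *\<^sub>R axis j 1)" by (rule mx_ge)
  have g2: "(w + a *\<^sub>R axis i 1) $ k \<le> mx (w + a *\<^sub>R axis i 1)" by (rule mx_ge)
  have g0: "w $ k \<le> mx w" by (rule mx_ge)
  show ?thesis
  proof (cases "k = i")
    case True
    then show ?thesis using k g2 m1 ij by (simp add: axis_def)
  next
    case False
    then show ?thesis using k g1 g2 g0 m2 ij by (cases "k = j") (auto simp: axis_def)
  qed
qed

lemma mx_abs: "\<bar>mx v\<bar> \<le> (\<Sum>k\<in>UNIV. \<bar>v $ k\<bar>)"
proof -
  obtain k where k: "mx v = v $ k" using mx_ex by blast
  have "\<bar>v $ k\<bar> \<le> (\<Sum>k\<in>UNIV. \<bar>v $ k\<bar>)"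
    by (rule member_le_sum) auto
  then show ?thesis using k by simp
qed

lemma sum_offdiag:
  fixes Y :: "'n::finite \<Rightarrow> real"
  shows "(\<Sum>j\<in>UNIV. if i = j then 0 else Y j) = (\<Sum>j\<in>UNIV. Y j) - Y i"
proof -
  have "(\<Sum>j\<in>UNIV. Y j) = (\<Sum>j\<in>UNIV. (if i = j then Y j else 0) + (if i = j then 0 else Y j))"
    by (rule sum.cong) auto
  also have "\<dots> = Y i + (\<Sum>j\<in>UNIV. if i = j then 0 else Y j)"
    by (simp only: sum.distrib sum.delta) simp
  finally show ?thesis by simp
qed

lemma surplus_mx: "surplus M eps eta \<theta> = (\<integral>\<omega>. mx (\<theta> + eta *\<^sub>R eps \<omega>) \<partial>M)"
  unfolding surplus_def mx_def by simp

context
  fixes M :: "'a measure" and eps :: "'a \<Rightarrow> real ^ 'n"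
  assumes prob: "prob_space M"
    and integ: "\<forall>i. integrable M (\<lambda>\<omega>. eps \<omega> $ i)"
    and mean0: "\<forall>i. (\<integral>\<omega>. eps \<omega> $ i \<partial>M) = 0"
begin

lemma icst: "integrable M (\<lambda>x. c)"
  using prob by (simp add: prob_space.finite_measure finite_measure.integrable_const)

lemma integ_mx: "integrable M (\<lambda>\<omega>. mx (\<theta> + eps \<omega>))"
proof (rule Bochner_Integration.integrable_bound[where f="\<lambda>\<omega>. \<Sum>k\<in>UNIV. \<bar>\<theta> $ k + eps \<omega> $ k\<bar>"])
  show "integrable M (\<lambda>\<omega>. \<Sum>k\<in>UNIV. \<bar>\<theta> $ k + eps \<omega> $ k\<bar>)"
    using integ by (intro Bochner_Integration.integrable_sum Bochner_Integration.integrable_abs Bochner_Integration.integrable_add icst) auto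
  have "(\<lambda>\<omega>. Max ((\<lambda>i. \<theta> $ i + eps \<omega> $ i) ` UNIV)) \<in> borel_measurable M"
    using integ by (intro borel_measurable_Max borel_measurable_add borel_measurable_const borel_measurable_integrable) auto
  then show "(\<lambda>\<omega>. mx (\<theta> + eps \<omega>)) \<in> borel_measurable M" unfolding mx_def by simp
  show "AE \<omega> in M. norm (mx (\<theta> + eps \<omega>)) \<le> norm (\<Sum>k\<in>UNIV. \<bar>\<theta> $ k + eps \<omega> $ k\<bar>)"
    using mx_abs[of "\<theta> + eps _"] by auto
qed

abbreviation "f \<equiv> surplus M eps 1"

lemma f_eq: "f \<theta> = (\<integral>\<omega>. mx (\<theta> + eps \<omega>) \<partial>M)"
  by (simp add: surplus_mx)

lemma f_lin: assumes y: "y \<in> prob_simplex" shows "\<theta> \<bullet> y \<le> f \<theta>"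
proof -
  have "(\<integral>\<omega>. (\<theta> + eps \<omega>) \<bullet> y \<partial>M) \<le> f \<theta>"
    unfolding f_eq using integ
    using icst by (intro integral_mono integ_mx mx_lin y) (auto simp: inner_vec_def algebra_simps intro!: Bochner_Integration.integrable_sum Bochner_Integration.integrable_add Bochner_Integration.integrable_mult_right Bochner_Integration.integrable_mult_left)
  moreover have "(\<integral>\<omega>. (\<theta> + eps \<omega>) \<bullet> y \<partial>M) = \<theta> \<bullet> y"
  proof -
    have "(\<integral>\<omega>. (\<theta> + eps \<omega>) \<bullet> y \<partial>M) = (\<integral>\<omega>. (\<Sum>i\<in>UNIV. \<theta> $ i * y $ i + y $ i * eps \<omega> $ i) \<partial>M)"
      by (simp add: inner_vec_def algebra_simps)
    also have "\<dots> = (\<Sum>i\<in>UNIV. (\<integral>\<omega>. \<theta> $ i * y $ i + y $ i * eps \<omega> $ i \<partial>M))"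
      using integ by (intro Bochner_Integration.integral_sum Bochner_Integration.integrable_add Bochner_Integration.integrable_mult_right icst) auto
    also have "\<dots> = (\<Sum>i\<in>UNIV. \<theta> $ i * y $ i)"
    proof (rule sum.cong[OF refl])
      fix i
      have "(\<integral>\<omega>. \<theta> $ i * y $ i + y $ i * eps \<omega> $ i \<partial>M) = (\<integral>\<omega>. \<theta> $ i * y $ i \<partial>M) + (\<integral>\<omega>. y $ i * eps \<omega> $ i \<partial>M)"
        using integ icst by (intro Bochner_Integration.integral_add Bochner_Integration.integrable_mult_right) auto
      then show "(\<integral>\<omega>. \<theta> $ i * y $ i + y $ i * eps \<omega> $ i \<partial>M) = \<theta> $ i * y $ i"
        using mean0 prob_space.prob_space[OF prob] by simp
    qed
    finally show ?thesis by (simp add: inner_vec_def)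
  qed
  ultimately show ?thesis by simp
qed

lemma f_convex: "convex_on UNIV f"
proof (rule convex_onI[OF _ convex_UNIV])
  fix t :: real and x y :: "real ^ 'n"
  assume t: "0 < t" "t < 1"
  have "f ((1 - t) *\<^sub>R x + t *\<^sub>R y) \<le> (\<integral>\<omega>. (1 - t) * mx (x + eps \<omega>) + t * mx (y + eps \<omega>) \<partial>M)"
    unfolding f_eq
  proof (intro integral_mono integ_mx)
    show "integrable M (\<lambda>\<omega>. (1 - t) * mx (x + eps \<omega>) + t * mx (y + eps \<omega>))"
      using integ_mx[of x] integ_mx[of y] by (intro Bochner_Integration.integrable_add Bochner_Integration.integrable_mult_right) auto
    fix \<omega>
    have "(1 - t) *\<^sub>R x + t *\<^sub>R y + eps \<omega> = (1 - t) *\<^sub>R (x + eps \<omega>) + (1 - (1 - t)) *\<^sub>R (y + eps \<omega>)"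
      by (simp add: algebra_simps)
    then show "mx ((1 - t) *\<^sub>R x + t *\<^sub>R y + eps \<omega>) \<le> (1 - t) * mx (x + eps \<omega>) + t * mx (y + eps \<omega>)"
      using mx_convex[of "1 - t" "x + eps \<omega>" "y + eps \<omega>"] t by simp
  qed
  also have "\<dots> = (1 - t) * f x + t * f y"
    unfolding f_eq by (simp add: integ_mx)
  finally show "f ((1 - t) *\<^sub>R x + t *\<^sub>R y) \<le> (1 - t) * f x + t * f y" .
qed

lemma f_mono: assumes "\<And>k. a $ k \<le> b $ k" shows "f a \<le> f b"
  unfolding f_eq using assms by (intro integral_mono integ_mx mx_mono) auto

lemma f_transl: "f (\<theta> + c *\<^sub>R one) = f \<theta> + c"
proof -
  have "f (\<theta> + c *\<^sub>R one) = (\<integral>\<omega>. mx (\<theta> + eps \<omega>) + c \<partial>M)"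
    unfolding f_eq using mx_add_const[of "\<theta> + eps _" c] by (simp add: algebra_simps)
  also have "\<dots> = f \<theta> + c"
    unfolding f_eq using integ_mx[of \<theta>] prob_space.prob_space[OF prob] by (subst Bochner_Integration.integral_add) (auto simp: prob_space.prob_space[OF prob] icst)
  finally show ?thesis .
qed

lemma f_submod:
  assumes ij: "i \<noteq> j" and s: "s \<ge> 0" and a: "a \<ge> 0"
  shows "f (w + s *\<^sub>R axis j 1 + a *\<^sub>R axis i 1) + f w
     \<le> f (w + s *\<^sub>R axis j 1) + f (w + a *\<^sub>R axis i 1)"
proof -
  let ?p = "w + s *\<^sub>R axis j 1 + a *\<^sub>R axis i 1"
  let ?q = "w + s *\<^sub>R axis j 1"
  let ?r = "w + a *\<^sub>R axis i 1"
  have "f ?p + f w = (\<integral>\<omega>. mx (?p + eps \<omega>) + mx (w + eps \<omega>) \<partial>M)"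
    unfolding f_eq using integ_mx[of ?p] integ_mx[of w]
    by (subst Bochner_Integration.integral_add) auto
  also have "\<dots> \<le> (\<integral>\<omega>. mx (?q + eps \<omega>) + mx (?r + eps \<omega>) \<partial>M)"
  proof (rule integral_mono)
    show "integrable M (\<lambda>\<omega>. mx (?p + eps \<omega>) + mx (w + eps \<omega>))"
      using integ_mx[of ?p] integ_mx[of w] by (intro Bochner_Integration.integrable_add) auto
    show "integrable M (\<lambda>\<omega>. mx (?q + eps \<omega>) + mx (?r + eps \<omega>))"
      using integ_mx[of ?q] integ_mx[of ?r] by (intro Bochner_Integration.integrable_add) auto
    fix \<omega>
    have e1: "?p + eps \<omega> = (w + eps \<omega>) + s *\<^sub>R axis j 1 + a *\<^sub>R axis i 1" by (simp add: algebra_simps)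
    have e2: "?q + eps \<omega> = (w + eps \<omega>) + s *\<^sub>R axis j 1" by (simp add: algebra_simps)
    have e3: "?r + eps \<omega> = (w + eps \<omega>) + a *\<^sub>R axis i 1" by (simp add: algebra_simps)
    show "mx (?p + eps \<omega>) + mx (w + eps \<omega>) \<le> mx (?q + eps \<omega>) + mx (?r + eps \<omega>)"
      unfolding e1 e2 e3 by (rule mx_submod[OF ij s a])
  qed
  also have "\<dots> = f ?q + f ?r"
    unfolding f_eq using integ_mx[of ?q] integ_mx[of ?r]
    by (subst Bochner_Integration.integral_add) auto
  finally show ?thesis .
qed

lemma f_scale: assumes "eta > 0" shows "surplus M eps eta \<theta> = eta * f ((1/eta) *\<^sub>R \<theta>)"
proof -
  have "surplus M eps eta \<theta> = (\<integral>\<omega>. eta * mx ((1/eta) *\<^sub>R \<theta> + eps \<omega>) \<partial>M)"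
    unfolding surplus_mx
  proof (rule Bochner_Integration.integral_cong[OF refl])
    fix \<omega>
    have "\<theta> + eta *\<^sub>R eps \<omega> = eta *\<^sub>R ((1/eta) *\<^sub>R \<theta> + eps \<omega>)" using assms by (simp add: algebra_simps)
    then show "mx (\<theta> + eta *\<^sub>R eps \<omega>) = eta * mx ((1/eta) *\<^sub>R \<theta> + eps \<omega>)"
      using mx_scale[OF assms] by simp
  qed
  then show ?thesis by (simp add: f_eq)
qed

end

lemma line_deriv:
  fixes F :: "real^'n \<Rightarrow> 'b::real_normed_vector"
  assumes "(F has_derivative F') (at (z + s *\<^sub>R d))"
  shows "((\<lambda>t. F (z + t *\<^sub>R d)) has_derivative (\<lambda>t. F' (t *\<^sub>R d))) (at s)"
proof -
  have "((\<lambda>t. z + t *\<^sub>R d) has_derivative (\<lambda>t. t *\<^sub>R d)) (at s)"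
    by (auto intro!: derivative_eq_intros)
  from diff_chain_at[OF this] assms show ?thesis by (simp add: o_def)
qed

lemma line_deriv_real:
  fixes F :: "real^'n \<Rightarrow> real"
  assumes "(F has_derivative (\<lambda>h. G \<bullet> h)) (at (z + s *\<^sub>R d))"
  shows "((\<lambda>t. F (z + t *\<^sub>R d)) has_real_derivative (G \<bullet> d)) (at s)"
proof -
  have "((\<lambda>t. F (z + t *\<^sub>R d)) has_derivative (\<lambda>t. G \<bullet> (t *\<^sub>R d))) (at s)"
    by (rule line_deriv[OF assms])
  moreover have "(\<lambda>t. G \<bullet> (t *\<^sub>R d)) = (*) (G \<bullet> d)" by (auto simp: algebra_simps)
  ultimately show ?thesis by (simp add: has_field_derivative_def)
qed

context
  fixes f :: "real^'n \<Rightarrow> real" and g :: "real^'n \<Rightarrow> real^'n" and H :: "real^'n \<Rightarrow> real^'n^'n"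
    and L :: real
  assumes cvx: "convex_on UNIV f"
    and grad: "\<forall>\<theta>. (f has_derivative (\<lambda>h. g \<theta> \<bullet> h)) (at \<theta>)"
    and hess: "\<forall>\<theta>. (g has_derivative (\<lambda>h. H \<theta> *v h)) (at \<theta>)"
    and trace: "\<forall>\<theta>. 2 * (\<Sum>i\<in>UNIV. H \<theta> $ i $ i) \<le> L"
    and mono: "\<forall>a b. (\<forall>k. a $ k \<le> b $ k) \<longrightarrow> f a \<le> f b"
    and transl: "\<forall>\<theta> c. f (\<theta> + c *\<^sub>R one) = f \<theta> + c"
    and submod: "\<forall>i j s a w. i \<noteq> j \<longrightarrow> s \<ge> 0 \<longrightarrow> a \<ge> 0 \<longrightarrow>
        f (w + s *\<^sub>R axis j 1 + a *\<^sub>R axis i 1) + f w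
     \<le> f (w + s *\<^sub>R axis j 1) + f (w + a *\<^sub>R axis i 1)"
begin

lemma support: "f \<theta> \<ge> f z + g z \<bullet> (\<theta> - z)"
proof -
  let ?d = "\<theta> - z"
  let ?p = "\<lambda>t. f (z + t *\<^sub>R ?d)"
  have c: "convex_on UNIV ?p"
  proof (rule convex_onI[OF _ convex_UNIV])
    fix t x y :: real assume t: "0 < t" "t < 1"
    have "z + ((1 - t) * x + t * y) *\<^sub>R ?d = (1 - t) *\<^sub>R (z + x *\<^sub>R ?d) + t *\<^sub>R (z + y *\<^sub>R ?d)"
      by (simp add: algebra_simps)
    then show "?p ((1 - t) *\<^sub>R x + t *\<^sub>R y) \<le> (1 - t) * ?p x + t * ?p y"
      using convex_onD[OF cvx, of t "z + x *\<^sub>R ?d" "z + y *\<^sub>R ?d"] t by simp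
  qed
  have d: "(?p has_real_derivative (g z \<bullet> ?d)) (at 0)"
    using grad by (intro line_deriv_real) simp
  have "?p 1 - ?p 0 \<ge> (g z \<bullet> ?d) * (1 - 0)"
    by (rule convex_on_imp_above_tangent[OF c]) (use d in auto)
  then show ?thesis by simp
qed

lemma g_simplex: "g z \<in> prob_simplex"
proof -
  have nn: "0 \<le> g z $ i" for i
  proof -
    have "f (z - axis i 1) \<ge> f z + g z \<bullet> ((z - axis i 1) - z)" by (rule support)
    moreover have "f (z - axis i 1) \<le> f z" using mono by (auto simp: axis_def)
    ultimately show ?thesis by (simp add: inner_axis)
  qed
  have s: "g z \<bullet> one = (\<Sum>i\<in>UNIV. g z $ i)" by (simp add: inner_vec_def one_def)
  have "f (z + 1 *\<^sub>R one) \<ge> f z + g z \<bullet> ((z + 1 *\<^sub>R one) - z)" by (rule support)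
  hence a: "g z \<bullet> one \<le> 1" using transl[rule_format, of z 1] by simp
  have "f (z + (-1) *\<^sub>R one) \<ge> f z + g z \<bullet> ((z + (-1) *\<^sub>R one) - z)" by (rule support)
  hence b: "g z \<bullet> one \<ge> 1" using transl[rule_format, of z "-1"] by simp
  show ?thesis unfolding prob_simplex_def using nn a b s by auto
qed


lemma g_comp_deriv: "((\<lambda>x. g x $ i) has_derivative (\<lambda>h. (H \<theta> *v h) $ i)) (at \<theta>)"
  using bounded_linear.has_derivative[OF bounded_linear_vec_nth hess[rule_format, of \<theta>]] .

lemma Hij: "(H \<theta> *v (t *\<^sub>R axis j 1)) $ i = t * H \<theta> $ i $ j"
  by (simp add: matrix_vector_mult_scaleR matrix_vector_mult_basis column_def)

lemma offdiag: assumes ij: "i \<noteq> j" shows "H \<theta> $ i $ j \<le> 0"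
proof -
  have step: "g (\<theta> + s *\<^sub>R axis j 1) $ i \<le> g (\<theta> + a *\<^sub>R axis i 1) $ i" if s: "s \<ge> 0" and a: "a > 0" for s a
  proof -
    let ?p = "\<theta> + s *\<^sub>R axis j 1" and ?q = "\<theta> + a *\<^sub>R axis i 1"
    have 1: "f (?p + a *\<^sub>R axis i 1) \<ge> f ?p + g ?p \<bullet> ((?p + a *\<^sub>R axis i 1) - ?p)" by (rule support)
    have 2: "f (\<theta> + s *\<^sub>R axis j 1 + a *\<^sub>R axis i 1) + f \<theta> \<le> f ?p + f ?q"
      using submod ij s a by auto
    have 3: "f \<theta> \<ge> f ?q + g ?q \<bullet> (\<theta> - ?q)" by (rule support)
    have "a * g ?p $ i \<le> a * g ?q $ i" using 1 2 3 by (simp add: inner_axis)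
    then show ?thesis using a by simp
  qed
  have der: "((\<lambda>t. g (\<theta> + t *\<^sub>R axis i 1) $ i) has_derivative (\<lambda>t. (H \<theta> *v (t *\<^sub>R axis i 1)) $ i)) (at 0)"
    using line_deriv[OF g_comp_deriv[of i "\<theta> + 0 *\<^sub>R axis i 1"]] by simp
  have "isCont (\<lambda>t. g (\<theta> + t *\<^sub>R axis i 1) $ i) 0"
    using has_derivative_continuous[OF der] .
  hence "((\<lambda>t. g (\<theta> + t *\<^sub>R axis i 1) $ i) \<longlongrightarrow> g \<theta> $ i) (at 0)"
    by (simp add: isCont_def)
  hence lim: "((\<lambda>t. g (\<theta> + t *\<^sub>R axis i 1) $ i) \<longlongrightarrow> g \<theta> $ i) (at_right 0)"
    by (rule tendsto_mono[OF at_within_le_at])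
  have le: "g (\<theta> + s *\<^sub>R axis j 1) $ i \<le> g \<theta> $ i" if s: "s \<ge> 0" for s
  proof (rule tendsto_lowerbound[OF lim])
    show "\<forall>\<^sub>F a in at_right 0. g (\<theta> + s *\<^sub>R axis j 1) $ i \<le> g (\<theta> + a *\<^sub>R axis i 1) $ i"
      using eventually_at_right_less[of "0::real"] by eventually_elim (use step s in auto)
  qed simp
  have derj: "((\<lambda>t. g (\<theta> + t *\<^sub>R axis j 1) $ i) has_derivative (\<lambda>t. (H \<theta> *v (t *\<^sub>R axis j 1)) $ i)) (at 0)"
    using line_deriv[OF g_comp_deriv[of i "\<theta> + 0 *\<^sub>R axis j 1"]] by simp
  moreover have "(\<lambda>t. (H \<theta> *v (t *\<^sub>R axis j 1)) $ i) = (*) (H \<theta> $ i $ j)"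
    by (auto simp: Hij)
  ultimately have "((\<lambda>t. g (\<theta> + t *\<^sub>R axis j 1) $ i) has_real_derivative (H \<theta> $ i $ j)) (at 0)"
    by (simp add: has_field_derivative_def)
  show ?thesis
  proof (rule ccontr)
    assume "\<not> ?thesis"
    then obtain d where "d > 0" and d: "\<forall>h>0. h < d \<longrightarrow> g (\<theta> + 0 *\<^sub>R axis j 1) $ i < g (\<theta> + (0 + h) *\<^sub>R axis j 1) $ i"
      using DERIV_pos_inc_right[OF \<open>(_ has_real_derivative _) _\<close>] by auto
    hence "g \<theta> $ i < g (\<theta> + (d/2) *\<^sub>R axis j 1) $ i" by auto
    with le[of "d/2"] \<open>d > 0\<close> show False by auto
  qed
qed

lemma colsum: "(\<Sum>i\<in>UNIV. H \<theta> $ i $ j) = 0"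
proof -
  have "((\<lambda>x. \<Sum>i\<in>UNIV. g x $ i) has_derivative (\<lambda>h. \<Sum>i\<in>UNIV. (H \<theta> *v h) $ i)) (at \<theta>)"
    by (intro has_derivative_sum g_comp_deriv)
  moreover have "(\<lambda>x. \<Sum>i\<in>UNIV. g x $ i) = (\<lambda>x. 1)"
    using g_simplex unfolding prob_simplex_def by auto
  ultimately have "((\<lambda>x. 1::real) has_derivative (\<lambda>h. \<Sum>i\<in>UNIV. (H \<theta> *v h) $ i)) (at \<theta>)" by simp
  from has_derivative_unique[OF this has_derivative_const]
  have "(\<lambda>h. \<Sum>i\<in>UNIV. (H \<theta> *v h) $ i) = (\<lambda>h. 0)" .
  hence "(\<Sum>i\<in>UNIV. (H \<theta> *v (1 *\<^sub>R axis j 1)) $ i) = 0" by meson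
  then show ?thesis by (simp only: Hij) simp
qed

lemma g_transl: "g (\<theta> + c *\<^sub>R one) = g \<theta>"
proof -
  have "((\<lambda>x. x + c *\<^sub>R one) has_derivative (\<lambda>h. h)) (at \<theta>)"
    by (auto intro!: derivative_eq_intros)
  from diff_chain_at[OF this, of f "\<lambda>h. g (\<theta> + c *\<^sub>R one) \<bullet> h"] grad
  have D1: "((\<lambda>x. f (x + c *\<^sub>R one)) has_derivative (\<lambda>h. g (\<theta> + c *\<^sub>R one) \<bullet> h)) (at \<theta>)"
    by (simp add: o_def)
  have "((\<lambda>x. f x + c) has_derivative (\<lambda>h. g \<theta> \<bullet> h + 0)) (at \<theta>)"
    using grad by (intro has_derivative_add has_derivative_const) auto
  moreover have "(\<lambda>x. f (x + c *\<^sub>R one)) = (\<lambda>x. f x + c)" using transl by auto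
  ultimately have D2: "((\<lambda>x. f (x + c *\<^sub>R one)) has_derivative (\<lambda>h. g \<theta> \<bullet> h)) (at \<theta>)" by simp
  have e: "(\<lambda>h. g (\<theta> + c *\<^sub>R one) \<bullet> h) = (\<lambda>h. g \<theta> \<bullet> h)"
    by (rule has_derivative_unique[OF D1 D2])
  show ?thesis
  proof (subst vec_eq_iff, intro allI)
    fix k
    from e have "g (\<theta> + c *\<^sub>R one) \<bullet> axis k 1 = g \<theta> \<bullet> axis k 1" by meson
    then show "g (\<theta> + c *\<^sub>R one) $ k = g \<theta> $ k" by (simp add: inner_axis)
  qed
qed

lemma rowsum: "(\<Sum>j\<in>UNIV. H \<theta> $ i $ j) = 0"
proof -
  have "((\<lambda>t. g (\<theta> + t *\<^sub>R one)) has_derivative (\<lambda>t. H \<theta> *v (t *\<^sub>R one))) (at 0)"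
    using line_deriv[of g "\<lambda>h. H \<theta> *v h" \<theta> 0 one] hess by simp
  moreover have "(\<lambda>t. g (\<theta> + t *\<^sub>R one)) = (\<lambda>t. g \<theta>)" using g_transl by auto
  ultimately have "((\<lambda>t. g \<theta>) has_derivative (\<lambda>t. H \<theta> *v (t *\<^sub>R one))) (at (0::real))" by simp
  from has_derivative_unique[OF this has_derivative_const]
  have "(\<lambda>t. H \<theta> *v (t *\<^sub>R one)) = (\<lambda>t. 0)" .
  hence "H \<theta> *v (1 *\<^sub>R one) = 0" by meson
  hence "(H \<theta> *v one) $ i = 0" by simp
  then show ?thesis by (simp add: matrix_vector_mult_def one_def)
qed


lemma quad:
  assumes hm: "\<And>k. \<bar>h $ k\<bar> \<le> m"
  shows "h \<bullet> (H \<theta> *v h) \<le> L * m\<^sup>2"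
proof -
  define A where "A = H \<theta>"
  have e: "h \<bullet> (A *v h) = (\<Sum>i\<in>UNIV. \<Sum>j\<in>UNIV. A $ i $ j * h $ i * h $ j)"
    by (simp add: inner_vec_def matrix_vector_mult_def sum_distrib_left algebra_simps)
  have r: "(\<Sum>j\<in>UNIV. A $ i $ j) = 0" for i unfolding A_def by (rule rowsum)
  have c: "(\<Sum>i\<in>UNIV. A $ i $ j) = 0" for j unfolding A_def by (rule colsum)
  have s1: "(\<Sum>i\<in>UNIV. \<Sum>j\<in>UNIV. A $ i $ j * (h $ i)\<^sup>2) = 0"
    by (simp add: sum_distrib_right[symmetric] r)
  have s2: "(\<Sum>i\<in>UNIV. \<Sum>j\<in>UNIV. A $ i $ j * (h $ j)\<^sup>2) = 0"
    by (subst sum.swap) (simp add: sum_distrib_right[symmetric] c)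
  have e2: "(\<Sum>i\<in>UNIV. \<Sum>j\<in>UNIV. A $ i $ j * (h $ i - h $ j)\<^sup>2)
     = (\<Sum>i\<in>UNIV. \<Sum>j\<in>UNIV. A $ i $ j * (h $ i)\<^sup>2) + (\<Sum>i\<in>UNIV. \<Sum>j\<in>UNIV. A $ i $ j * (h $ j)\<^sup>2)
       - 2 * (\<Sum>i\<in>UNIV. \<Sum>j\<in>UNIV. A $ i $ j * h $ i * h $ j)"
    by (simp add: power2_eq_square algebra_simps sum.distrib sum_subtractf sum_distrib_left)
  have m0: "m \<ge> 0" using hm[of undefined] by linarith
  have b: "- A $ i $ j * (h $ i - h $ j)\<^sup>2 \<le> (if i = j then 0 else - A $ i $ j * (4 * m\<^sup>2))" for i j
  proof (cases "i = j")
    case False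
    have "A $ i $ j \<le> 0" unfolding A_def using offdiag False by blast
    moreover have "(h $ i - h $ j)\<^sup>2 \<le> (2 * m)\<^sup>2"
    proof -
      have "\<bar>h $ i - h $ j\<bar> \<le> 2 * m" using hm[of i] hm[of j] by linarith
      then show ?thesis by (metis abs_ge_zero power2_abs power_mono)
    qed
    ultimately show ?thesis using False by (simp add: mult_left_mono_neg power_mult_distrib)
  qed simp
  have rs: "(\<Sum>j\<in>UNIV. (if i = j then 0 else - A $ i $ j * (4 * m\<^sup>2))) = A $ i $ i * (4 * m\<^sup>2)" for i
  proof -
    have a3: "(\<Sum>j\<in>UNIV. - A $ i $ j * (4 * m\<^sup>2)) = 0"
      by (simp only: mult_minus_left sum_negf sum_distrib_right[symmetric] r)
    show ?thesis by (simp only: sum_offdiag a3)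
  qed
  have "- (\<Sum>i\<in>UNIV. \<Sum>j\<in>UNIV. A $ i $ j * (h $ i - h $ j)\<^sup>2)
      = (\<Sum>i\<in>UNIV. \<Sum>j\<in>UNIV. - A $ i $ j * (h $ i - h $ j)\<^sup>2)"
    by (simp add: sum_negf)
  also have "\<dots> \<le> (\<Sum>i\<in>UNIV. \<Sum>j\<in>UNIV. (if i = j then 0 else - A $ i $ j * (4 * m\<^sup>2)))"
    by (intro sum_mono b)
  also have "\<dots> = (\<Sum>i\<in>UNIV. A $ i $ i) * (4 * m\<^sup>2)"
    by (simp add: rs sum_distrib_right)
  finally have q1: "2 * (h \<bullet> (A *v h)) \<le> (\<Sum>i\<in>UNIV. A $ i $ i) * (4 * m\<^sup>2)"
    using e e2 s1 s2 by linarith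
  have "2 * (\<Sum>i\<in>UNIV. A $ i $ i) \<le> L" unfolding A_def using trace by blast
  hence q2: "(2 * (\<Sum>i\<in>UNIV. A $ i $ i)) * (2 * m\<^sup>2) \<le> L * (2 * m\<^sup>2)"
    by (intro mult_right_mono) auto
  have q3: "(\<Sum>i\<in>UNIV. A $ i $ i) * (4 * m\<^sup>2) = (2 * (\<Sum>i\<in>UNIV. A $ i $ i)) * (2 * m\<^sup>2)"
    by simp
  have "2 * (h \<bullet> (A *v h)) \<le> L * (2 * m\<^sup>2)"
    using q1 q2 q3 by linarith
  then show ?thesis unfolding A_def by simp
qed

lemma taylor:
  assumes hm: "\<And>k. \<bar>h $ k\<bar> \<le> m"
  shows "f (z + h) \<le> f z + g z \<bullet> h + L * m\<^sup>2 / 2"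
proof -
  define K where "K = L * m\<^sup>2"
  define q where "q t = g (z + t *\<^sub>R h) \<bullet> h" for t
  have dq: "(q has_real_derivative ((H (z + t *\<^sub>R h) *v h) \<bullet> h)) (at t)" for t
  proof -
    have "((\<lambda>x. g x \<bullet> h) has_derivative (\<lambda>v. (H (z + t *\<^sub>R h) *v v) \<bullet> h)) (at (z + t *\<^sub>R h))"
      using bounded_linear.has_derivative[OF bounded_linear_inner_left hess[rule_format]] .
    from line_deriv[OF this]
    have "(q has_derivative (\<lambda>s. (H (z + t *\<^sub>R h) *v (s *\<^sub>R h)) \<bullet> h)) (at t)"
      unfolding q_def .
    moreover have "(\<lambda>s. (H (z + t *\<^sub>R h) *v (s *\<^sub>R h)) \<bullet> h) = (*) ((H (z + t *\<^sub>R h) *v h) \<bullet> h)"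
      by (auto simp: matrix_vector_mult_scaleR)
    ultimately show ?thesis by (simp add: has_field_derivative_def)
  qed
  define E where "E t = q t - q 0 - K * t" for t
  have dE: "(E has_real_derivative ((H (z + t *\<^sub>R h) *v h) \<bullet> h - K)) (at t)" for t
    unfolding E_def using dq[of t] by (auto intro!: derivative_eq_intros)
  have Ele: "E t \<le> 0" if "t \<ge> 0" for t
  proof -
    have "E t \<le> E 0"
    proof (rule DERIV_nonpos_imp_nonincreasing[OF that])
      fix x
      have "(H (z + x *\<^sub>R h) *v h) \<bullet> h \<le> K"
        using quad[OF hm, of "z + x *\<^sub>R h"] unfolding K_def by (simp add: inner_commute)
      then show "\<exists>y. (E has_real_derivative y) (at x) \<and> y \<le> 0"
        using dE[of x] by (intro exI[where x="(H (z + x *\<^sub>R h) *v h) \<bullet> h - K"]) auto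
    qed
    then show ?thesis by (simp add: E_def)
  qed
  define D where "D t = f (z + t *\<^sub>R h) - f z - t * q 0 - K * t\<^sup>2 / 2" for t
  have dD: "(D has_real_derivative E t) (at t)" for t
  proof -
    have "((\<lambda>t. f (z + t *\<^sub>R h)) has_real_derivative q t) (at t)"
      unfolding q_def by (rule line_deriv_real) (use grad in auto)
    then show ?thesis unfolding D_def E_def
      by (auto intro!: derivative_eq_intros simp: power2_eq_square algebra_simps)
  qed
  have "D 1 \<le> D 0"
    by (rule DERIV_nonpos_imp_nonincreasing) (use dD Ele in auto)
  then show ?thesis by (simp add: D_def q_def K_def)
qed

end

lemma linf_comp: "\<bar>v $ k\<bar> \<le> linf_norm v"
  unfolding linf_norm_def by (rule Max_ge) auto

lemma simplex_ne: "axis k 1 \<in> prob_simplex"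
proof -
  have "(\<Sum>i\<in>UNIV. axis k 1 $ i) = (1::real)"
    by (simp add: axis_def)
  then show ?thesis unfolding prob_simplex_def by (auto simp: axis_def)
qed

context
  fixes F :: "real^'n \<Rightarrow> real" and G :: "real^'n \<Rightarrow> real^'n" and c :: real
    and R :: "real^'n \<Rightarrow> real"
  assumes P1: "\<And>\<theta> y. y \<in> prob_simplex \<Longrightarrow> \<theta> \<bullet> y \<le> F \<theta>"
    and P2: "\<And>\<theta> z. F \<theta> \<ge> F z + G z \<bullet> (\<theta> - z)"
    and P3: "\<And>z h m. (\<And>k. \<bar>h $ k\<bar> \<le> m) \<Longrightarrow> F (z + h) \<le> F z + G z \<bullet> h + c * m\<^sup>2"
    and P4: "\<And>z. G z \<in> prob_simplex"
    and R_def: "\<And>y. R y = (SUP \<theta>. \<theta> \<bullet> y - F \<theta>)"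
begin

lemma bdd: "y \<in> prob_simplex \<Longrightarrow> bdd_above (range (\<lambda>\<theta>. \<theta> \<bullet> y - F \<theta>))"
  using P1 by (intro bdd_aboveI[of _ 0]) force

lemma argmax_sub:
  assumes x: "x \<in> prob_simplex"
    and am: "\<forall>y\<in>prob_simplex. z \<bullet> y - R y \<le> z \<bullet> x - R x"
  shows "F \<theta> \<ge> F z + x \<bullet> (\<theta> - z)"
proof -
  have "R (G z) \<le> z \<bullet> G z - F z"
    unfolding R_def
  proof (rule cSUP_least)
    fix \<theta>
    have "F \<theta> \<ge> F z + G z \<bullet> (\<theta> - z)" by (rule P2)
    then show "\<theta> \<bullet> G z - F \<theta> \<le> z \<bullet> G z - F z" by (simp add: inner_diff_right inner_commute)
  qed simp
  moreover have "z \<bullet> G z - R (G z) \<le> z \<bullet> x - R x" using am P4 by blast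
  ultimately have Rx: "R x \<le> z \<bullet> x - F z" by linarith
  have "\<theta> \<bullet> x - F \<theta> \<le> R x" unfolding R_def by (rule cSUP_upper[OF _ bdd[OF x]]) simp
  with Rx show ?thesis by (simp add: inner_diff_right inner_commute)
qed

lemma argmax_grad:
  assumes x: "x \<in> prob_simplex"
    and am: "\<forall>y\<in>prob_simplex. z \<bullet> y - R y \<le> z \<bullet> x - R x"
  shows "x \<bullet> h = G z \<bullet> h"
proof -
  have le: "x \<bullet> h \<le> G z \<bullet> h" for h
  proof (rule ccontr)
    assume "\<not> ?thesis"
    define \<delta> where "\<delta> = x \<bullet> h - G z \<bullet> h"
    define m where "m = (\<Sum>k\<in>UNIV. \<bar>h $ k\<bar>)"
    define K where "K = \<bar>c\<bar> * m\<^sup>2 + 1"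
    define s where "s = \<delta> / (2 * K)"
    have \<delta>: "\<delta> > 0" using \<open>\<not> _\<close> unfolding \<delta>_def by simp
    have K: "K > 0" unfolding K_def by (simp add: add_nonneg_pos)
    have s: "s > 0" unfolding s_def using \<delta> K by simp
    have hm: "\<bar>(s *\<^sub>R h) $ k\<bar> \<le> s * m" for k
    proof -
      have "\<bar>h $ k\<bar> \<le> m" unfolding m_def by (rule member_le_sum) auto
      then show ?thesis using s by (simp add: abs_mult mult_left_mono)
    qed
    have "F (z + s *\<^sub>R h) \<le> F z + G z \<bullet> (s *\<^sub>R h) + c * (s * m)\<^sup>2" by (rule P3[OF hm])
    moreover have "F (z + s *\<^sub>R h) \<ge> F z + x \<bullet> ((z + s *\<^sub>R h) - z)" by (rule argmax_sub[OF x am])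
    ultimately have "s * (x \<bullet> h) \<le> s * (G z \<bullet> h) + s * (s * (c * m\<^sup>2))"
      by (simp add: power2_eq_square algebra_simps)
    hence "x \<bullet> h \<le> G z \<bullet> h + s * (c * m\<^sup>2)" using s
      by (simp add: distrib_left[symmetric])
    hence "\<delta> \<le> s * (c * m\<^sup>2)" unfolding \<delta>_def by simp
    also have "\<dots> \<le> s * (\<bar>c\<bar> * m\<^sup>2)" using s by (intro mult_left_mono) (auto simp: abs_ge_self mult_right_mono)
    also have "\<dots> < s * K" using s unfolding K_def by simp
    also have "\<dots> = \<delta> / 2" unfolding s_def using K by simp
    finally show False using \<delta> by simp
  qed
  have "x \<bullet> (- h) \<le> G z \<bullet> (- h)" by (rule le)
  with le[of h] show ?thesis by simp
qed

end

lemma udiff: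
  fixes u :: "int \<Rightarrow> real^'n"
  assumes u_nonpos: "\<forall>\<tau>\<le>0. u \<tau> = 0"
    and u_var: "\<forall>t\<in>{1..int T}. linf_norm (u t - u (t - 1)) \<le> B"
    and B: "B \<ge> 0" and t: "t \<le> int T"
  shows "\<bar>(u t - u (t - int d)) $ k\<bar> \<le> real d * B"
proof (induction d)
  case 0
  then show ?case by simp
next
  case (Suc d)
  define s where "s = t - int d"
  have st: "s \<le> int T" unfolding s_def using t by simp
  have one: "\<bar>(u s - u (s - 1)) $ k\<bar> \<le> B"
  proof (cases "s \<ge> 1")
    case True
    then show ?thesis using u_var st linf_comp[of "u s - u (s - 1)" k] by force
  next
    case False
    then show ?thesis using u_nonpos B by simp
  qed
  have "(u t - u (t - int (Suc d))) $ k = (u t - u (t - int d)) $ k + (u s - u (s - 1)) $ k"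
    unfolding s_def by (simp add: algebra_simps)
  hence "\<bar>(u t - u (t - int (Suc d))) $ k\<bar> \<le> \<bar>(u t - u (t - int d)) $ k\<bar> + \<bar>(u s - u (s - 1)) $ k\<bar>"
    by (metis abs_triangle_ineq)
  also have "\<dots> \<le> real d * B + B" using Suc one by simp
  finally show ?case by (simp add: algebra_simps)
qed

lemma hbound:
  fixes u :: "int \<Rightarrow> real^'n"
  assumes u_nonpos: "\<forall>\<tau>\<le>0. u \<tau> = 0"
    and u_var: "\<forall>t\<in>{1..int T}. linf_norm (u t - u (t - 1)) \<le> B"
    and B: "B \<ge> 0" and t: "t \<le> int T" and S: "S \<ge> 1"
  shows "\<bar>(u t - recency S u t) $ k\<bar> \<le> real S * B"
proof -
  define I where "I = {t - int S..t - 1}"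
  have cI: "card I = S" unfolding I_def by simp
  have fI: "finite I" unfolding I_def by simp
  have Spos: "real S > 0" using S by simp
  have "(u t - recency S u t) $ k = (1 / real S) * (\<Sum>\<tau>\<in>I. u t $ k - u \<tau> $ k)"
    using Spos unfolding recency_def I_def[symmetric]
    by (simp add: sum_subtractf cI field_simps)
  hence "\<bar>(u t - recency S u t) $ k\<bar> = (1 / real S) * \<bar>\<Sum>\<tau>\<in>I. u t $ k - u \<tau> $ k\<bar>"
    using Spos by (simp add: abs_mult)
  also have "\<dots> \<le> (1 / real S) * (\<Sum>\<tau>\<in>I. real S * B)"
  proof (intro mult_left_mono order.trans[OF sum_abs] sum_mono)
    fix \<tau> assume "\<tau> \<in> I"
    then have tr: "t - int S \<le> \<tau>" "\<tau> \<le> t - 1" unfolding I_def by auto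
    define d where "d = nat (t - \<tau>)"
    have "int d = t - \<tau>" unfolding d_def using tr by simp
    hence d: "\<tau> = t - int d" "d \<le> S" using tr by auto
    have "\<bar>(u t - u (t - int d)) $ k\<bar> \<le> real d * B" by (rule udiff[OF u_nonpos u_var B t])
    also have "\<dots> \<le> real S * B" using d B by (simp add: mult_right_mono)
    finally show "\<bar>u t $ k - u \<tau> $ k\<bar> \<le> real S * B" using d by simp
  qed simp
  also have "\<dots> = real S * B" using cI Spos by simp
  finally show ?thesis .
qed

theorem proposition5:
  fixes M :: "'a measure" and eps :: "'a \<Rightarrow> real ^ 'n"
    and g :: "real ^ 'n \<Rightarrow> real ^ 'n" and H :: "real ^ 'n \<Rightarrow> real ^ 'n ^ 'n"
    and L B :: real and S T :: nat
    and u x :: "int \<Rightarrow> real ^ 'n" and eta :: real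
  assumes N2: "CARD('n) \<ge> 2"
    (* Assumption 1 *)
    and prob: "prob_space M"
    and meas: "eps \<in> borel_measurable M"
    and integ: "\<forall>i. integrable M (\<lambda>\<omega>. eps \<omega> $ i)"
    and mean0: "\<forall>i. (\<integral>\<omega>. eps \<omega> $ i \<partial>M) = 0"
    and abscont: "absolutely_continuous lborel (distr M borel eps)"
    and fullsupp: "\<forall>U. open U \<and> U \<noteq> {} \<longrightarrow> 0 < emeasure (distr M borel eps) U"
    (* Assumption 2: phi_1 is C^2 with gradient g and Hessian H, 2 tr(H) \<le> L *)
    and grad: "\<forall>\<theta>. (surplus M eps 1 has_derivative (\<lambda>h. g \<theta> \<bullet> h)) (at \<theta>)"
    and hess: "\<forall>\<theta>. (g has_derivative (\<lambda>h. H \<theta> *v h)) (at \<theta>)"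
    and hess_cont: "continuous_on UNIV H"
    and Lpos: "L > 0"
    and trace: "\<forall>\<theta>. 2 * (\<Sum>i\<in>UNIV. H \<theta> $ i $ i) \<le> L"
    (* setting *)
    and S1: "S \<ge> 1" and Bpos: "B > 0"
    and u_nonpos: "\<forall>\<tau>\<le>0. u \<tau> = 0"
    and u_var: "\<forall>t\<in>{1..int T}. linf_norm (u t - u (t - 1)) \<le> B"
    and phi0: "surplus M eps 1 0 > 0"
    and eta_def: "eta = sqrt (L * real T * real S ^ 2 * B ^ 2 / (2 * surplus M eps 1 0))"
    (* OFTRL iterates *)
    and x_simplex: "\<forall>t\<in>{1..int T}. x t \<in> prob_simplex"
    and x_argmax: "\<forall>t\<in>{1..int T}. \<forall>y\<in>prob_simplex.
        (cumul u (t - 1) + recency S u t) \<bullet> y - regularizer M eps eta y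
        \<le> (cumul u (t - 1) + recency S u t) \<bullet> x t - regularizer M eps eta (x t)"
  shows "regret u x T \<le> real S * B * sqrt (2 * L * real T * surplus M eps 1 0)"
proof -
  note fl = f_lin[OF prob integ mean0]
  note fs = f_scale[OF prob integ mean0]
  have cvx: "convex_on UNIV (surplus M eps 1)" by (rule f_convex[OF prob integ mean0])
  have mono: "\<forall>a b. (\<forall>k. a $ k \<le> b $ k) \<longrightarrow> surplus M eps 1 a \<le> surplus M eps 1 b"
    using f_mono[OF prob integ mean0] by blast
  have transl: "\<forall>\<theta> c. surplus M eps 1 (\<theta> + c *\<^sub>R one) = surplus M eps 1 \<theta> + c"
    using f_transl[OF prob integ mean0] by blast
  have submod: "\<forall>i j s a w. i \<noteq> j \<longrightarrow> s \<ge> 0 \<longrightarrow> a \<ge> 0 \<longrightarrow>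
        surplus M eps 1 (w + s *\<^sub>R axis j 1 + a *\<^sub>R axis i 1) + surplus M eps 1 w
     \<le> surplus M eps 1 (w + s *\<^sub>R axis j 1) + surplus M eps 1 (w + a *\<^sub>R axis i 1)"
    using f_submod[OF prob integ mean0] by blast
  note supp = support[OF cvx grad hess trace mono transl submod]
  note gs = g_simplex[OF cvx grad hess trace mono transl submod]
  note tay = taylor[OF cvx grad hess trace mono transl submod]
  have c0: "cumul u 0 = 0" by (simp add: cumul_def)
  show ?thesis
  proof (cases "T = 0")
    case True
    have "(SUP y\<in>prob_simplex. cumul u (int T) \<bullet> y) = 0"
    proof -
      have ne: "prob_simplex \<noteq> ({} :: (real^'n) set)" using simplex_ne by blast
      show ?thesis using True c0 cSUP_const[OF ne, of 0] by simp
    qed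
    then show ?thesis using True by (simp add: regret_def)
  next
    case False
    let ?a = "surplus M eps 1 0"
    have Tpos: "real T > 0" using False by simp
    have Spos: "real S > 0" using S1 by simp
    define Q where "Q = L * real T * real S ^ 2 * B ^ 2"
    have Qpos: "Q > 0" unfolding Q_def using Lpos Tpos Spos Bpos by simp
    have eta_pos: "eta > 0" unfolding eta_def using Lpos Tpos Spos Bpos phi0 by simp
    define F where "F = surplus M eps eta"
    define G where "G z = g ((1/eta) *\<^sub>R z)" for z
    define c where "c = L / (2 * eta)"
    have P1: "\<theta> \<bullet> y \<le> F \<theta>" if "y \<in> prob_simplex" for \<theta> y
    proof -
      have "((1/eta) *\<^sub>R \<theta>) \<bullet> y \<le> surplus M eps 1 ((1/eta) *\<^sub>R \<theta>)" by (rule fl[OF that])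
      hence "eta * (((1/eta) *\<^sub>R \<theta>) \<bullet> y) \<le> eta * surplus M eps 1 ((1/eta) *\<^sub>R \<theta>)"
        using eta_pos by (intro mult_left_mono) auto
      moreover have "eta * (((1/eta) *\<^sub>R \<theta>) \<bullet> y) = \<theta> \<bullet> y" using eta_pos by simp
      ultimately show ?thesis unfolding F_def fs[OF eta_pos] by simp
    qed
    have P2: "F \<theta> \<ge> F z + G z \<bullet> (\<theta> - z)" for \<theta> z
    proof -
      have "surplus M eps 1 ((1/eta) *\<^sub>R \<theta>) \<ge> surplus M eps 1 ((1/eta) *\<^sub>R z) + G z \<bullet> ((1/eta) *\<^sub>R \<theta> - (1/eta) *\<^sub>R z)"
        unfolding G_def by (rule supp)
      hence "eta * surplus M eps 1 ((1/eta) *\<^sub>R \<theta>) \<ge> eta * (surplus M eps 1 ((1/eta) *\<^sub>R z) + G z \<bullet> ((1/eta) *\<^sub>R \<theta> - (1/eta) *\<^sub>R z))"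
        using eta_pos by simp
      moreover have "eta * (G z \<bullet> ((1/eta) *\<^sub>R \<theta> - (1/eta) *\<^sub>R z)) = G z \<bullet> (\<theta> - z)"
        using eta_pos by (simp add: inner_diff_right right_diff_distrib)
      ultimately show ?thesis unfolding F_def fs[OF eta_pos] by (simp add: distrib_left)
    qed
    have P3: "F (z + h) \<le> F z + G z \<bullet> h + c * m\<^sup>2" if hm: "\<And>k. \<bar>h $ k\<bar> \<le> m" for z h m
    proof -
      have hm': "\<bar>((1/eta) *\<^sub>R h) $ k\<bar> \<le> m / eta" for k
        using hm[of k] eta_pos by (simp add: abs_mult divide_right_mono)
      have "surplus M eps 1 ((1/eta) *\<^sub>R z + (1/eta) *\<^sub>R h)
          \<le> surplus M eps 1 ((1/eta) *\<^sub>R z) + G z \<bullet> ((1/eta) *\<^sub>R h) + L * (m / eta)\<^sup>2 / 2"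
        unfolding G_def by (rule tay[OF hm'])
      hence "eta * surplus M eps 1 ((1/eta) *\<^sub>R z + (1/eta) *\<^sub>R h)
          \<le> eta * (surplus M eps 1 ((1/eta) *\<^sub>R z) + G z \<bullet> ((1/eta) *\<^sub>R h) + L * (m / eta)\<^sup>2 / 2)"
        using eta_pos by simp
      moreover have "eta * (G z \<bullet> ((1/eta) *\<^sub>R h)) = G z \<bullet> h" using eta_pos by simp
      moreover have "eta * (L * (m / eta)\<^sup>2 / 2) = c * m\<^sup>2"
        unfolding c_def using eta_pos by (simp add: power2_eq_square field_simps)
      ultimately show ?thesis unfolding F_def fs[OF eta_pos]
        by (simp add: distrib_left scaleR_add_right)
    qed
    have P4: "G z \<in> prob_simplex" for z unfolding G_def by (rule gs)
    have R_def: "regularizer M eps eta y = (SUP \<theta>. \<theta> \<bullet> y - F \<theta>)" for y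
      unfolding regularizer_def F_def ..
    define K where "K = c * (real S * B)\<^sup>2"
    have step: "F (cumul u t) \<le> F (cumul u (t - 1)) + u t \<bullet> x t + K" if t: "t \<in> {1..int T}" for t
    proof -
      define z where "z = cumul u (t - 1) + recency S u t"
      define h where "h = u t - recency S u t"
      have xs: "x t \<in> prob_simplex" using x_simplex t by blast
      have am: "\<forall>y\<in>prob_simplex. z \<bullet> y - regularizer M eps eta y \<le> z \<bullet> x t - regularizer M eps eta (x t)"
        using x_argmax t unfolding z_def by blast
      have ct: "cumul u t = cumul u (t - 1) + u t"
      proof -
        have "{1..t} = insert t {1..t - 1}" using t by auto
        then show ?thesis unfolding cumul_def by (simp add: add.commute)
      qed
      have zh: "cumul u t = z + h" unfolding ct z_def h_def by simp
      have hb: "\<bar>h $ k\<bar> \<le> real S * B" for k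
        unfolding h_def using hbound[OF u_nonpos u_var _ _ S1] Bpos t by auto
      have a1: "F (z + h) \<le> F z + G z \<bullet> h + K" unfolding K_def by (rule P3[OF hb])
      have a2: "x t \<bullet> h = G z \<bullet> h"
        by (rule argmax_grad[OF P1 P2 P3 P4 R_def xs am])
      have a3: "F (cumul u (t - 1)) \<ge> F z + x t \<bullet> (cumul u (t - 1) - z)"
        by (rule argmax_sub[OF P1 P2 P3 P4 R_def xs am])
      have "x t \<bullet> h + x t \<bullet> (z - cumul u (t - 1)) = u t \<bullet> x t"
        unfolding h_def z_def by (simp add: inner_diff_right inner_commute)
      moreover have "x t \<bullet> (cumul u (t - 1) - z) = - (x t \<bullet> (z - cumul u (t - 1)))"
        by (simp add: inner_diff_right)
      moreover have "F (cumul u t) = F (z + h)" using zh by simp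
      ultimately show ?thesis using a1 a2 a3 by linarith
    qed
    have tele: "F (cumul u (int n)) \<le> eta * ?a + (\<Sum>t\<in>{1..int n}. u t \<bullet> x t) + real n * K"
      if "n \<le> T" for n
      using that
    proof (induction n)
      case 0
      then show ?case using c0 unfolding F_def fs[OF eta_pos] by simp
    next
      case (Suc n)
      have "F (cumul u (int (Suc n))) \<le> F (cumul u (int (Suc n) - 1)) + u (int (Suc n)) \<bullet> x (int (Suc n)) + K"
        using Suc.prems by (intro step) auto
      moreover have "{1..int (Suc n)} = insert (int (Suc n)) {1..int n}" by auto
      ultimately show ?case using Suc by (simp add: algebra_simps)
    qed
    have "(SUP y\<in>prob_simplex. cumul u (int T) \<bullet> y) \<le> F (cumul u (int T))"
      using P1 simplex_ne by (intro cSUP_least) auto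
    hence reg: "regret u x T \<le> eta * ?a + real T * K"
      using tele[of T] unfolding regret_def by simp
    define r where "r = sqrt (2 * ?a * Q)"
    have rpos: "r > 0" unfolding r_def using phi0 Qpos by simp
    have "eta\<^sup>2 = Q / (2 * ?a)" unfolding eta_def Q_def using Lpos Tpos Spos Bpos phi0 by simp
    also have "\<dots> = (r / (2 * ?a))\<^sup>2" unfolding r_def using phi0 Qpos by (simp add: power_divide power2_eq_square)
    finally have eta_r: "eta = r / (2 * ?a)" using eta_pos rpos phi0
      by (metis divide_pos_pos less_eq_real_def power2_eq_iff_nonneg zero_less_mult_iff zero_less_numeral)
    hence e1: "eta * ?a = r / 2" using phi0 by simp
    have r2: "r\<^sup>2 = 2 * ?a * Q" unfolding r_def using phi0 Qpos by simp
    have "real T * K = Q / (2 * eta)" unfolding K_def c_def Q_def by (simp add: power2_eq_square field_simps)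
    also have "\<dots> = Q * ?a / r" unfolding eta_r using phi0 rpos by (simp add: field_simps)
    also have "\<dots> = r / 2" using r2 rpos phi0 by (simp add: field_simps power2_eq_square)
    finally have e2: "real T * K = r / 2" .
    have "real S * B * sqrt (2 * L * real T * ?a) = sqrt ((real S * B)\<^sup>2) * sqrt (2 * L * real T * ?a)"
      using Spos Bpos by simp
    also have "\<dots> = r" unfolding r_def Q_def by (simp add: real_sqrt_mult[symmetric] algebra_simps)
    finally show ?thesis using reg e1 e2 by simp
  qed
qed

end
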